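(* Let $\Omega\subset\mathbb{R}^d$ be a bounded open set, $\mathcal{O}\subset\mathbb{R}^d$ a nonempty open set and $\mathfrak{B}\in W^{1,\infty}(\mathbb{R}^d)^d$ (independent of time). Assume that for every $x_0\in\overline{\Omega}$ there exists $t\in(-\infty,0)$ with $\Phi(t,0,x_0)\in\mathcal{O}$. Then there exist $T_0>0$ and $r_0>0$ such that, for all $T>T_0$, $(T,T_0,r_0,\mathfrak{B},\Omega)$ satisfies the flushing condition for $\mathcal{O}$.
   Context: $\Phi(t,t_0,x_0)$ denotes the solution of $\frac{d}{dt}\Phi(t,t_0,x_0)=\mathfrak{B}(\Phi(t,t_0,x_0))$, $\Phi(t_0,t_0,x_0)=x_0$. Given $T>0$, $T_0\in(0,T)$, $r_0>0$ and a nonempty open $\mathcal{O}\subset\mathbb{R}^d$, we say $(T,T_0,r_0,\mathfrak{B},\Omega)$ satisfies the flushing condition for $\mathcal{O}$ if: for all $x_0\in\overline{\Omega}$ and all $t_0\in[T_0,T]$ there exists $t\in(t_0-T_0,t_0)$ such that $\Phi(t,t_0,x)\in\mathcal{O}$ for all $x\in\overline{B}(x_0,r_0)$ (closed ball). *)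

theory Defs
  imports "HOL-Analysis.Analysis"
begin

definition is_flow :: "('a::euclidean_space \<Rightarrow> 'a) \<Rightarrow> (real \<Rightarrow> real \<Rightarrow> 'a \<Rightarrow> 'a) \<Rightarrow> bool" where
  "is_flow B \<Phi> \<longleftrightarrow>
     (\<forall>t0 x0. \<Phi> t0 t0 x0 = x0 \<and>
        (\<forall>t. ((\<lambda>s. \<Phi> s t0 x0) has_vector_derivative B (\<Phi> t t0 x0)) (at t)))"

text \<open>W^{1,\<infinity>}(R^d)^d, identified with its Lipschitz continuous representative:
  bounded and globally Lipschitz.\<close>
definition W1inf :: "('a::euclidean_space \<Rightarrow> 'a) \<Rightarrow> bool" where
  "W1inf B \<longleftrightarrow> bounded (range B) \<and> (\<exists>L. L-lipschitz_on UNIV B)"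

definition flushing_condition ::
  "real \<Rightarrow> real \<Rightarrow> real \<Rightarrow> (real \<Rightarrow> real \<Rightarrow> 'a::euclidean_space \<Rightarrow> 'a) \<Rightarrow> 'a set \<Rightarrow> 'a set \<Rightarrow> bool" where
  "flushing_condition T T0 r0 \<Phi> \<Omega> \<O> \<longleftrightarrow>
     (\<forall>x0\<in>closure \<Omega>. \<forall>t0\<in>{T0..T}. \<exists>t\<in>{t0 - T0<..<t0}. \<forall>x\<in>cball x0 r0. \<Phi> t t0 x \<in> \<O>)"

end

theory Submission
  imports Defs
begin

lemma gron:
  fixes B :: "'a::euclidean_space \<Rightarrow> 'a" and y z :: "real \<Rightarrow> 'a"
  assumes L: "L-lipschitz_on UNIV B"
    and dy: "\<And>s. (y has_vector_derivative B (y s)) (at s)"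
    and dz: "\<And>s. (z has_vector_derivative B (z s)) (at s)"
    and sa: "s \<le> a"
  shows "exp (2 * L * s) * ((y s - z s) \<bullet> (y s - z s)) \<le> exp (2 * L * a) * ((y a - z a) \<bullet> (y a - z a))"
proof (rule DERIV_nonneg_imp_nondecreasing[OF sa])
  fix x assume "s \<le> x" "x \<le> a"
  define w where "w = y x - z x"
  define w' where "w' = B (y x) - B (z x)"
  have dw: "((\<lambda>t. y t - z t) has_vector_derivative w') (at x)"
    unfolding w'_def by (intro derivative_intros dy dz)
  have du: "((\<lambda>t. (y t - z t) \<bullet> (y t - z t)) has_real_derivative (2 * (w \<bullet> w'))) (at x)"
  proof -
    have "((\<lambda>t. (y t - z t) \<bullet> (y t - z t)) has_derivative (\<lambda>h. (y x - z x) \<bullet> (h *\<^sub>R w') + (h *\<^sub>R w') \<bullet> (y x - z x))) (at x)"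
      using dw unfolding has_vector_derivative_def
      by (intro has_derivative_inner) auto
    moreover have "(\<lambda>h. (y x - z x) \<bullet> (h *\<^sub>R w') + (h *\<^sub>R w') \<bullet> (y x - z x)) = (*) (2 * (w \<bullet> w'))"
      unfolding w_def by (auto simp: inner_commute algebra_simps)
    ultimately show ?thesis unfolding has_field_derivative_def by simp
  qed
  have L0: "0 \<le> L" using L lipschitz_on_nonneg by blast
  have "norm w' \<le> L * norm w"
    using L unfolding w'_def w_def lipschitz_on_def by (auto simp: dist_norm)
  hence "\<bar>w \<bullet> w'\<bar> \<le> L * (w \<bullet> w)"
  proof -
    have "\<bar>w \<bullet> w'\<bar> \<le> norm w * norm w'" by (rule Cauchy_Schwarz_ineq2)
    also have "\<dots> \<le> norm w * (L * norm w)" using \<open>norm w' \<le> L * norm w\<close> by (intro mult_left_mono) auto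
    also have "\<dots> = L * (w \<bullet> w)" by (simp add: power2_norm_eq_inner[symmetric] power2_eq_square)
    finally show ?thesis .
  qed
  hence "0 \<le> exp (2 * L * x) * (2*L*(w \<bullet> w) + 2 * (w \<bullet> w'))"
    by (intro mult_nonneg_nonneg) auto
  moreover have "((\<lambda>t. exp (2 * L * t) * ((y t - z t) \<bullet> (y t - z t))) has_real_derivative
      (exp (2 * L * x) * (2*L) * (w \<bullet> w) + exp (2 * L * x) * (2 * (w \<bullet> w')))) (at x)"
  proof -
    have "((\<lambda>t. exp (2 * L * t)) has_real_derivative (exp (2 * L * x) * (2 * L))) (at x)"
      by (auto intro!: derivative_eq_intros)
    from DERIV_mult[OF this du] show ?thesis unfolding w_def by (simp add: mult.commute)
  qed
  ultimately show "\<exists>d. ((\<lambda>t. exp (2 * L * t) * ((y t - z t) \<bullet> (y t - z t))) has_real_derivative d) (at x) \<and> 0 \<le> d"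
    by (auto simp: algebra_simps)
qed

lemma gron2:
  fixes B :: "'a::euclidean_space \<Rightarrow> 'a" and y z :: "real \<Rightarrow> 'a"
  assumes L: "L-lipschitz_on UNIV B"
    and dy: "\<And>s. (y has_vector_derivative B (y s)) (at s)"
    and dz: "\<And>s. (z has_vector_derivative B (z s)) (at s)"
    and sa: "s \<le> a"
  shows "norm (y s - z s) \<le> exp (L * (a - s)) * norm (y a - z a)"
proof -
  have g: "exp (2 * L * s) * (norm (y s - z s))^2 \<le> exp (2 * L * a) * (norm (y a - z a))^2"
    using gron[OF L dy dz sa] by (simp add: power2_norm_eq_inner)
  have "(norm (y s - z s))^2 \<le> exp (2 * L * a) / exp (2 * L * s) * (norm (y a - z a))^2"
    using g by (simp add: field_simps)
  also have "exp (2 * L * a) / exp (2 * L * s) = (exp (L * (a - s)))^2"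
    by (simp add: exp_diff[symmetric] exp_double[symmetric] power2_eq_square exp_add[symmetric] algebra_simps)
  finally have "(norm (y s - z s))^2 \<le> (exp (L * (a - s)) * norm (y a - z a))^2"
    by (simp add: power_mult_distrib)
  thus ?thesis by (rule power2_le_imp_le) simp
qed

lemma flow_shift:
  assumes "is_flow B \<Phi>"
  shows "((\<lambda>s. \<Phi> (s - t0) 0 x) has_vector_derivative B (\<Phi> (s - t0) 0 x)) (at s)"
proof -
  have d1: "((\<lambda>s. s - t0) has_vector_derivative 1) (at s)"
    by (auto intro!: derivative_eq_intros)
  have d2: "((\<lambda>r. \<Phi> r 0 x) has_vector_derivative B (\<Phi> (s - t0) 0 x)) (at (s - t0))"
    using assms unfolding is_flow_def by blast
  from vector_diff_chain_at[OF d1 d2] show ?thesis by (simp add: o_def)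
qed

theorem proposition2p1:
  fixes B :: "'a::euclidean_space \<Rightarrow> 'a"
    and \<Phi> :: "real \<Rightarrow> real \<Rightarrow> 'a \<Rightarrow> 'a"
    and \<Omega> \<O> :: "'a set"
  assumes "bounded \<Omega>" and "open \<Omega>"
    and "open \<O>" and "\<O> \<noteq> {}"
    and "W1inf B"
    and "is_flow B \<Phi>"
    and "\<forall>x0\<in>closure \<Omega>. \<exists>t<0. \<Phi> t 0 x0 \<in> \<O>"
  shows "\<exists>T0>0. \<exists>r0>0. \<forall>T>T0. flushing_condition T T0 r0 \<Phi> \<Omega> \<O>"
proof -
  obtain L where L: "L-lipschitz_on UNIV B" using assms(5) unfolding W1inf_def by blast
  have L0: "0 \<le> L" using L lipschitz_on_nonneg by blast
  have fl: "\<And>t0 x0 t. ((\<lambda>s. \<Phi> s t0 x0) has_vector_derivative B (\<Phi> t t0 x0)) (at t)"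
    and fl0: "\<And>t0 x0. \<Phi> t0 t0 x0 = x0"
    using assms(6) unfolding is_flow_def by auto
  have flow_eq: "\<Phi> t t0 x = \<Phi> (t - t0) 0 x" if "t \<le> t0" for t t0 x
  proof -
    have "norm (\<Phi> t t0 x - \<Phi> (t - t0) 0 x) \<le> exp (L * (t0 - t)) * norm (\<Phi> t0 t0 x - \<Phi> (t0 - t0) 0 x)"
      by (rule gron2[OF L fl flow_shift[OF assms(6)] that])
    thus ?thesis using fl0 by simp
  qed
  have lip: "(exp (L * (0 - t)))-lipschitz_on UNIV (\<Phi> t 0)" if "t \<le> 0" for t
  proof (rule lipschitz_onI)
    fix x x' :: 'a
    have "norm (\<Phi> t 0 x - \<Phi> t 0 x') \<le> exp (L * (0 - t)) * norm (\<Phi> 0 0 x - \<Phi> 0 0 x')"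
      by (rule gron2[OF L fl fl that])
    thus "dist (\<Phi> t 0 x) (\<Phi> t 0 x') \<le> exp (L * (0 - t)) * dist x x'"
      using fl0 by (simp add: dist_norm)
  qed simp
  define U where "U t = \<Phi> t 0 -` \<O>" for t
  have openU: "open (U t)" if "t \<in> {t. t < 0}" for t
  proof -
    have "continuous_on UNIV (\<Phi> t 0)"
      using lipschitz_on_continuous_on[OF lip] that by auto
    then show ?thesis unfolding U_def
      by (intro continuous_open_vimage assms(3)) (simp add: continuous_on_eq_continuous_at)
  qed
  have K: "compact (closure \<Omega>)" using assms(1) compact_closure by blast
  have cov: "closure \<Omega> \<subseteq> (\<Union>t\<in>{t. t < 0}. U t)"
    using assms(7) unfolding U_def by auto
  obtain C' where C': "C' \<subseteq> {t. t < 0}" "finite C'" "closure \<Omega> \<subseteq> (\<Union>t\<in>C'. U t)"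
    using compactE_image[OF K openU cov] by blast
  obtain e where e: "0 < e" "\<And>x. x \<in> closure \<Omega> \<Longrightarrow> \<exists>G \<in> U ` C'. ball x e \<subseteq> G"
    using Heine_Borel_lemma[OF K, of "U ` C'"] C' openU by blast
  define T0 where "T0 = 1 + (\<Sum>t\<in>C'. \<bar>t\<bar>)"
  have T0: "T0 > 0" unfolding T0_def by (simp add: sum_nonneg add_pos_nonneg)
  have Tb: "\<bar>t\<bar> < T0" if "t \<in> C'" for t
  proof -
    have "\<bar>t\<bar> \<le> (\<Sum>t\<in>C'. \<bar>t\<bar>)" by (rule member_le_sum[OF that _ C'(2)]) simp
    thus ?thesis unfolding T0_def by simp
  qed
  have "flushing_condition T T0 (e/2) \<Phi> \<Omega> \<O>" for T
    unfolding flushing_condition_def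
  proof (intro ballI)
    fix x0 t0 assume x0: "x0 \<in> closure \<Omega>" and t0: "t0 \<in> {T0..T}"
    obtain t where t: "t \<in> C'" "ball x0 e \<subseteq> U t" using e(2)[OF x0] by blast
    have tneg: "t < 0" using t C' by auto
    show "\<exists>s\<in>{t0 - T0<..<t0}. \<forall>x\<in>cball x0 (e/2). \<Phi> s t0 x \<in> \<O>"
    proof (intro bexI ballI)
      fix x assume "x \<in> cball x0 (e/2)"
      hence "x \<in> ball x0 e" using e(1) by auto
      hence "\<Phi> t 0 x \<in> \<O>" using t unfolding U_def by auto
      thus "\<Phi> (t0 + t) t0 x \<in> \<O>" using flow_eq[of "t0 + t" t0 x] tneg by simp
    next
      show "t0 + t \<in> {t0 - T0<..<t0}" using Tb[OF t(1)] tneg by auto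
    qed
  qed
  thus ?thesis using T0 e(1) by (metis half_gt_zero)
qed

end
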